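(* Let $(\Gamma,d)$ be a countable discrete metric space admitting an $F$-function, and let $(\mathcal{A},\{\mathcal{A}_X\}_{X\in\mathcal{P}_0(\Gamma)},\Phi)$ be a quantum many-body system satisfying (A1) whose interaction $\Phi$ is bounded and has finite range. Then for every $\mu>0$ there are constants $c_\mu,v_\mu>0$ such that: for all $X,Y,\Lambda\in\mathcal{P}_0(\Gamma)$ with $X\subseteq Y\cap\Lambda$, all $A\in\mathcal{A}_X$, all $B\in\mathcal{A}_Y'\cap\mathcal{A}$ and all $t\in\mathbb{R}$, \[ \|[\alpha^t_\Lambda(A),B]\|\le c_\mu\|A\|\|B\|\,|\partial_\Phi X|\,e^{-\mu(d(X,Y^c)-v_\mu|t|)}. \]
   Context: $(\Gamma,d)$ is a countable discrete metric space, $\mathcal{P}_0(\Gamma)$ its finite subsets, $Y^c:=\Gamma\setminus Y$, $d(X,Y):=\inf\{d(x,y):x\in X,y\in Y\}$, $\mathrm{diam}(X):=\sup_{x,y\in X}d(x,y)$. An $F$-function is a non-increasing $F:[0,\infty)\to(0,\infty)$ with $\sup_{x}\sum_{y}F(d(x,y))<\infty$ and $\sup_{x,y}\sum_{z}F(d(x,z))F(d(z,y))/F(d(x,y))<\infty$. A quantum many-body system is a triple $(\mathcal{A},\{\mathcal{A}_X\},\Phi)$: $\mathcal{A}$ a unital $C^*$-algebra, $\{\mathcal{A}_X\}_{X\in\mathcal{P}_0(\Gamma)}$ an increasing net of simple $C^*$-subalgebras with norm-dense union $\mathcal{A}_{\mathrm{loc}}$, $\Phi:\mathcal{P}_0(\Gamma)\to\mathcal{A}_{\mathrm{loc}}$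 with $\Phi(X)=\Phi(X)^*\in\mathcal{A}_X$; $\mathcal{A}_\Lambda$ for $\Lambda\subseteq\Gamma$ is the $C^*$-algebra generated by the $\mathcal{A}_X$, $X\subseteq\Lambda$ finite; $\mathcal{A}_Y'\cap\mathcal{A}$ is the set of elements of $\mathcal{A}$ commuting with $\mathcal{A}_Y$. (A1): $\Phi(X)$ commutes with $\mathcal{A}_{X^c}$. $\Phi$ is bounded if $\sup_x\sum_{X\in\mathcal{P}_0(\Gamma),x\in X}\|\Phi(X)\|/|X|<\infty$ and has finite range if for some $\mathfrak{r}>0$, $\Phi(X)=0$ whenever $\mathrm{diam}(X)>\mathfrak{r}$. $H_\Lambda:=\sum_{X\subseteq\Lambda}\Phi(X)$, $\alpha^t_\Lambda(A):=e^{itH_\Lambda}Ae^{-itH_\Lambda}$. $\partial_\Phi X:=\{x\in X:\exists Z\in\mathcal{P}_0(\Gamma),\ x\in Z,\ Z\cap X^c\neq\emptyset,\ \Phi(Z)\neq0\}$. *)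

theory Defs
  imports "HOL-Analysis.Analysis"
begin

definition metric_on :: "('g \<Rightarrow> 'g \<Rightarrow> real) \<Rightarrow> bool" where
  "metric_on d \<longleftrightarrow>
     (\<forall>x y. 0 \<le> d x y) \<and> (\<forall>x y. d x y = 0 \<longleftrightarrow> x = y) \<and>
     (\<forall>x y. d x y = d y x) \<and> (\<forall>x y z. d x z \<le> d x y + d y z)"

definition countable_discrete_metric :: "('g \<Rightarrow> 'g \<Rightarrow> real) \<Rightarrow> bool" where
  "countable_discrete_metric d \<longleftrightarrow>
     metric_on d \<and> countable (UNIV :: 'g set) \<and>
     (\<forall>x. \<exists>e>0. \<forall>y. d x y < e \<longrightarrow> y = x)"

definition is_F_function :: "('g \<Rightarrow> 'g \<Rightarrow> real) \<Rightarrow> (real \<Rightarrow> real) \<Rightarrow> bool" where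
  "is_F_function d F \<longleftrightarrow>
     (\<forall>r\<ge>0. F r > 0) \<and>
     (\<forall>r s. 0 \<le> r \<longrightarrow> r \<le> s \<longrightarrow> F s \<le> F r) \<and>
     (\<exists>C. \<forall>x. (\<lambda>y. F (d x y)) summable_on UNIV \<and> (\<Sum>\<^sub>\<infinity>y. F (d x y)) \<le> C) \<and>
     (\<exists>C. \<forall>x y. (\<lambda>z. F (d x z) * F (d z y) / F (d x y)) summable_on UNIV \<and>
                 (\<Sum>\<^sub>\<infinity>z. F (d x z) * F (d z y) / F (d x y)) \<le> C)"

definition setdist_d :: "('g \<Rightarrow> 'g \<Rightarrow> real) \<Rightarrow> 'g set \<Rightarrow> 'g set \<Rightarrow> real" where
  "setdist_d d X Y = Inf {d x y | x y. x \<in> X \<and> y \<in> Y}"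

definition diam_d :: "('g \<Rightarrow> 'g \<Rightarrow> real) \<Rightarrow> 'g set \<Rightarrow> real" where
  "diam_d d X = (if X = {} then 0 else Sup {d x y | x y. x \<in> X \<and> y \<in> X})"

text \<open>The algebra is the whole type 'a, a real Banach algebra with unit, together with
  an involution st and an element j playing the role of the complex unit i*1, making it a
  complex Banach algebra with complex-homogeneous norm, satisfying the C*-identity.\<close>

definition unital_cstar_algebra ::
  "('a::{real_normed_algebra_1,banach} \<Rightarrow> 'a) \<Rightarrow> 'a \<Rightarrow> bool" where
  "unital_cstar_algebra st j \<longleftrightarrow>
     (\<forall>x y. st (x + y) = st x + st y) \<and>
     (\<forall>r x. st (scaleR r x) = scaleR r (st x)) \<and>
     (\<forall>x y. st (x * y) = st y * st x) \<and>
     (\<forall>x. st (st x) = x) \<and>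
     st j = - j \<and> j * j = - 1 \<and> (\<forall>x. j * x = x * j) \<and>
     (\<forall>a b x. norm (scaleR a x + scaleR b (j * x)) = sqrt (a\<^sup>2 + b\<^sup>2) * norm x) \<and>
     (\<forall>x. norm (st x * x) = (norm x)\<^sup>2)"

definition cstar_subalgebra ::
  "('a::{real_normed_algebra_1,banach} \<Rightarrow> 'a) \<Rightarrow> 'a \<Rightarrow> 'a set \<Rightarrow> bool" where
  "cstar_subalgebra st j S \<longleftrightarrow>
     0 \<in> S \<and> (\<forall>x\<in>S. \<forall>y\<in>S. x + y \<in> S \<and> x * y \<in> S) \<and>
     (\<forall>r. \<forall>x\<in>S. scaleR r x \<in> S) \<and> (\<forall>x\<in>S. j * x \<in> S) \<and>
     (\<forall>x\<in>S. st x \<in> S) \<and> closed S"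

definition closed_ideal_of ::
  "'a::{real_normed_algebra_1,banach} \<Rightarrow> 'a set \<Rightarrow> 'a set \<Rightarrow> bool" where
  "closed_ideal_of j S I \<longleftrightarrow>
     I \<subseteq> S \<and> 0 \<in> I \<and> (\<forall>x\<in>I. \<forall>y\<in>I. x + y \<in> I) \<and>
     (\<forall>r. \<forall>x\<in>I. scaleR r x \<in> I) \<and> (\<forall>x\<in>I. j * x \<in> I) \<and>
     (\<forall>a\<in>S. \<forall>x\<in>I. a * x \<in> I \<and> x * a \<in> I) \<and> closed I"

definition simple_cstar_subalgebra ::
  "('a::{real_normed_algebra_1,banach} \<Rightarrow> 'a) \<Rightarrow> 'a \<Rightarrow> 'a set \<Rightarrow> bool" where
  "simple_cstar_subalgebra st j S \<longleftrightarrow>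
     cstar_subalgebra st j S \<and> S \<noteq> {0} \<and>
     (\<forall>I. closed_ideal_of j S I \<longrightarrow> I = {0} \<or> I = S)"

definition cstar_generated ::
  "('a::{real_normed_algebra_1,banach} \<Rightarrow> 'a) \<Rightarrow> 'a \<Rightarrow> 'a set \<Rightarrow> 'a set" where
  "cstar_generated st j G = \<Inter>{T. cstar_subalgebra st j T \<and> G \<subseteq> T}"

definition local_alg ::
  "('a::{real_normed_algebra_1,banach} \<Rightarrow> 'a) \<Rightarrow> 'a \<Rightarrow> ('g set \<Rightarrow> 'a set) \<Rightarrow> 'g set \<Rightarrow> 'a set" where
  "local_alg st j \<A> \<Lambda> = cstar_generated st j (\<Union>{\<A> X | X. finite X \<and> X \<subseteq> \<Lambda>})"

definition qmb_system ::
  "('a::{real_normed_algebra_1,banach} \<Rightarrow> 'a) \<Rightarrow> 'a \<Rightarrow> ('g set \<Rightarrow> 'a set) \<Rightarrow> ('g set \<Rightarrow> 'a) \<Rightarrow> bool" where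
  "qmb_system st j \<A> \<Phi> \<longleftrightarrow>
     unital_cstar_algebra st j \<and>
     (\<forall>X. finite X \<longrightarrow> simple_cstar_subalgebra st j (\<A> X)) \<and>
     (\<forall>X Y. finite X \<longrightarrow> finite Y \<longrightarrow> X \<subseteq> Y \<longrightarrow> \<A> X \<subseteq> \<A> Y) \<and>
     closure (\<Union>{\<A> X | X. finite X}) = UNIV \<and>
     (\<forall>X. finite X \<longrightarrow> st (\<Phi> X) = \<Phi> X \<and> \<Phi> X \<in> \<A> X)"

definition A1 ::
  "('a::{real_normed_algebra_1,banach} \<Rightarrow> 'a) \<Rightarrow> 'a \<Rightarrow> ('g set \<Rightarrow> 'a set) \<Rightarrow> ('g set \<Rightarrow> 'a) \<Rightarrow> bool" where
  "A1 st j \<A> \<Phi> \<longleftrightarrow>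
     (\<forall>X. finite X \<longrightarrow> (\<forall>b\<in>local_alg st j \<A> (- X). \<Phi> X * b = b * \<Phi> X))"

definition bounded_interaction :: "('g set \<Rightarrow> 'a::real_normed_vector) \<Rightarrow> bool" where
  "bounded_interaction \<Phi> \<longleftrightarrow>
     (\<exists>C. \<forall>x. (\<lambda>X. norm (\<Phi> X) / real (card X)) summable_on {X. finite X \<and> x \<in> X} \<and>
              (\<Sum>\<^sub>\<infinity>X\<in>{X. finite X \<and> x \<in> X}. norm (\<Phi> X) / real (card X)) \<le> C)"

definition finite_range :: "('g \<Rightarrow> 'g \<Rightarrow> real) \<Rightarrow> ('g set \<Rightarrow> 'a::zero) \<Rightarrow> bool" where
  "finite_range d \<Phi> \<longleftrightarrow>
     (\<exists>r>0. \<forall>X. finite X \<longrightarrow> diam_d d X > r \<longrightarrow> \<Phi> X = 0)"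

definition hamiltonian :: "('g set \<Rightarrow> 'a::real_normed_algebra_1) \<Rightarrow> 'g set \<Rightarrow> 'a" where
  "hamiltonian \<Phi> \<Lambda> = (\<Sum>X\<in>Pow \<Lambda>. \<Phi> X)"

definition dynamics ::
  "'a::{real_normed_algebra_1,banach} \<Rightarrow> ('g set \<Rightarrow> 'a) \<Rightarrow> 'g set \<Rightarrow> real \<Rightarrow> 'a \<Rightarrow> 'a" where
  "dynamics j \<Phi> \<Lambda> t A =
     exp (scaleR t (j * hamiltonian \<Phi> \<Lambda>)) * A * exp (- scaleR t (j * hamiltonian \<Phi> \<Lambda>))"

definition phi_boundary :: "('g set \<Rightarrow> 'a::zero) \<Rightarrow> 'g set \<Rightarrow> 'g set" where
  "phi_boundary \<Phi> X = {x \<in> X. \<exists>Z. finite Z \<and> x \<in> Z \<and> Z \<inter> - X \<noteq> {} \<and> \<Phi> Z \<noteq> 0}"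

end

theory Submission
  imports Defs
begin


locale cst =
  fixes st :: "'a::{real_normed_algebra_1,banach} \<Rightarrow> 'a" and j :: 'a
  assumes ax: "unital_cstar_algebra st j"
begin

lemma st_add: "st (x + y) = st x + st y" using ax unfolding unital_cstar_algebra_def by blast
lemma st_scaleR: "st (scaleR r x) = scaleR r (st x)" using ax unfolding unital_cstar_algebra_def by blast
lemma st_mult: "st (x * y) = st y * st x" using ax unfolding unital_cstar_algebra_def by blast
lemma st_st: "st (st x) = x" using ax unfolding unital_cstar_algebra_def by blast
lemma st_j: "st j = - j" using ax unfolding unital_cstar_algebra_def by blast
lemma jj: "j * j = - 1" using ax unfolding unital_cstar_algebra_def by blast
lemma j_comm: "j * x = x * j" using ax unfolding unital_cstar_algebra_def by blast
lemma cstar: "norm (st x * x) = (norm x)\<^sup>2" using ax unfolding unital_cstar_algebra_def by blast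
lemma norm_ax: "norm (scaleR a x + scaleR b (j * x)) = sqrt (a\<^sup>2 + b\<^sup>2) * norm x"
  using ax unfolding unital_cstar_algebra_def by blast
lemma norm_j: "norm (j * x) = norm x"
  using norm_ax[of 0 x 1] by simp

lemma st_0: "st 0 = 0" using st_scaleR[of 0 0] by simp
lemma st_minus: "st (- x) = - st x" using st_scaleR[of "-1" x] by simp
lemma st_diff: "st (x - y) = st x - st y" by (metis diff_conv_add_uminus st_add st_minus)
lemma st_1: "st 1 = 1"
proof -
  have "st (st 1 * 1) = st 1 * st (st 1)" by (rule st_mult)
  then show ?thesis by (simp add: st_st)
qed

lemma norm_st: "norm (st x) = norm x"
proof -
  have le: "norm y \<le> norm (st y)" for y
  proof (cases "y = 0")
    case True then show ?thesis by simp
  next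
    case False
    have "(norm y)\<^sup>2 \<le> norm (st y) * norm y" using cstar[of y] norm_mult_ineq[of "st y" y] by simp
    then show ?thesis using False by (simp add: power2_eq_square)
  qed
  show ?thesis using le[of x] le[of "st x"] by (simp add: st_st)
qed

lemma bl_st: "bounded_linear st"
  by (rule bounded_linear_intro[where K=1]) (auto simp: st_add st_scaleR norm_st)

lemma st_power: "st (x ^ n) = (st x) ^ n"
  by (induction n) (simp_all add: st_1 st_mult power_commutes)

lemma st_exp: "st (exp x) = exp (st x)"
  unfolding exp_def
  by (simp add: bounded_linear.suminf[OF bl_st summable_exp_generic] st_power st_scaleR)

lemma norm_exp_skew: assumes "st K = - K" shows "norm (exp K) = 1"
proof -
  have "(norm (exp K))\<^sup>2 = norm (st (exp K) * exp K)" by (simp add: cstar)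
  also have "st (exp K) * exp K = 1"
    by (simp add: st_exp assms) (metis exp_minus_inverse minus_minus)
  finally show ?thesis using norm_ge_zero[of "exp K"] by (simp add: power2_eq_1_iff)
qed

lemma skew: assumes "st H = H" shows "st (s *\<^sub>R (j * H)) = - (s *\<^sub>R (j * H))"
  by (simp add: st_scaleR st_mult assms st_j j_comm[of H])

lemma norm_U: assumes "st H = H" shows "norm (exp (s *\<^sub>R (j * H))) = 1"
  by (rule norm_exp_skew[OF skew[OF assms]])

lemma norm_U': assumes "st H = H" shows "norm (exp (- (s *\<^sub>R (j * H)))) = 1"
  using norm_U[OF assms, of "-s"] by simp

lemma neg: "cst st (- j)"
proof -
  have n: "norm (scaleR a x + scaleR b (- j * x)) = sqrt (a\<^sup>2 + b\<^sup>2) * norm x" for a b x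
    using norm_ax[of a x "-b"] by simp
  have jc: "- j * x = x * - j" for x using j_comm[of x] by simp
  have "st (- j) = - (- j)" by (simp add: st_minus st_j)
  moreover have "(- j) * (- j) = - 1" by (simp add: jj)
  ultimately show ?thesis unfolding cst_def unital_cstar_algebra_def
    using n jc st_add st_scaleR st_mult st_st cstar by blast
qed

end

lemma exp_comm: fixes x y :: "'a::{real_normed_algebra_1,banach}"
  assumes "x * y = y * x" shows "exp x * y = y * exp x"
  unfolding exp_def
  by (simp add: suminf_mult[symmetric] summable_exp_generic suminf_mult2 power_commuting_commutes[OF assms])



lemma mv_bound:
  fixes f :: "real \<Rightarrow> 'a::banach"
  assumes t: "0 \<le> t"
    and fd: "\<And>s. s \<in> {0..t} \<Longrightarrow> (f has_vector_derivative f' s) (at s within {0..t})"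
    and gd: "\<And>s. s \<in> {0..t} \<Longrightarrow> (g has_real_derivative g' s) (at s within {0..t})"
    and b: "\<And>s. s \<in> {0..t} \<Longrightarrow> norm (f' s) \<le> g' s"
  shows "norm (f t - f 0) \<le> g t - g 0"
proof -
  have i1: "(f' has_integral (f t - f 0)) {0..t}"
    by (rule fundamental_theorem_of_calculus[OF t fd])
  have i2: "(g' has_integral (g t - g 0)) {0..t}"
    by (rule fundamental_theorem_of_calculus[OF t])
       (use gd in \<open>auto simp: has_real_derivative_iff_has_vector_derivative\<close>)
  have "norm (integral {0..t} f') \<le> integral {0..t} g'"
    using i1 i2 b by (intro integral_norm_bound_integral) auto
  then show ?thesis using i1 i2 by (simp add: integral_unique)
qed

definition dyn :: "'a::{real_normed_algebra_1,banach} \<Rightarrow> 'a \<Rightarrow> real \<Rightarrow> 'a \<Rightarrow> 'a" where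
  "dyn j H t C = exp (t *\<^sub>R (j * H)) * C * exp (- (t *\<^sub>R (j * H)))"

definition comm :: "'a::ring \<Rightarrow> 'a \<Rightarrow> 'a" where "comm x y = x * y - y * x"

lemma norm_comm_le: "norm (comm (x::'a::real_normed_algebra) y) \<le> 2 * norm x * norm y"
proof -
  have "norm (comm x y) \<le> norm (x*y) + norm (y*x)" unfolding comm_def by (rule norm_triangle_ineq4)
  also have "\<dots> \<le> norm x * norm y + norm y * norm x" by (intro add_mono norm_mult_ineq)
  finally show ?thesis by simp
qed

context cst begin

lemma norm_conj_le:
  fixes U :: 'a assumes "norm U = 1" "norm V = 1" shows "norm (U * X * V) \<le> norm X"
proof -
  have "norm (U * X * V) \<le> norm U * norm X * norm V"
    using norm_mult_ineq[of "U*X" V] norm_mult_ineq[of U X] mult_right_mono[OF norm_mult_ineq[of U X] norm_ge_zero[of V]] by linarith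
  then show ?thesis using assms by simp
qed

lemma duhamel:
  assumes H1: "st H1 = H1" and L: "st L = L" and t: "0 \<le> t"
    and gd: "\<And>s. s \<in> {0..t} \<Longrightarrow> (g has_real_derivative g' s) (at s within {0..t})"
    and gb: "\<And>s. s \<in> {0..t} \<Longrightarrow> norm (comm (dyn j (H1+L) s L) B) \<le> g' s"
  shows "norm (comm (dyn j (H1+L) t C) B) \<le> norm (comm (dyn j H1 t C) B) + 2 * norm C * (g t - g 0)"
proof -
  define K where "K = j * (H1 + L)"
  define K1 where "K1 = j * H1"
  have H: "st (H1 + L) = H1 + L" using H1 L by (simp add: st_add)
  define E1 where "E1 s = exp (s *\<^sub>R K1)" for s
  define E2 where "E2 s = exp (s *\<^sub>R (- K))" for s
  define E3 where "E3 s = exp (s *\<^sub>R K)" for s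
  define E4 where "E4 s = exp (s *\<^sub>R (- K1))" for s
  have n1: "norm (E1 s) = 1" for s unfolding E1_def K1_def by (rule norm_U[OF H1])
  have n3: "norm (E3 s) = 1" for s unfolding E3_def K_def by (rule norm_U[OF H])
  have n2: "norm (E2 s) = 1" for s unfolding E2_def K_def using norm_U'[OF H, of s] by simp
  have n4: "norm (E4 s) = 1" for s unfolding E4_def K1_def using norm_U'[OF H1, of s] by simp
  have e23: "E2 s * E3 s = 1" "E3 s * E2 s = 1" for s
    unfolding E2_def E3_def using exp_minus_inverse[of "s *\<^sub>R K"] exp_minus_inverse[of "- (s *\<^sub>R K)"]
    by simp_all
  have e14: "E1 s * E4 s = 1" "E4 s * E1 s = 1" for s
    unfolding E1_def E4_def using exp_minus_inverse[of "s *\<^sub>R K1"] exp_minus_inverse[of "- (s *\<^sub>R K1)"]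
    by simp_all
  have e23': "E2 s * (E3 s * X) = X" "E3 s * (E2 s * X) = X" for s X
    using e23[of s] by (metis mult.assoc mult_1_left)+
  have e14': "E1 s * (E4 s * X) = X" "E4 s * (E1 s * X) = X" for s X
    using e14[of s] by (metis mult.assoc mult_1_left)+
  define M where "M s = E2 s * B * E3 s" for s
  define Bf where "Bf s = E1 s * E2 s * B * E3 s * E4 s" for s
  define D where "D s = E1 s * ((K1 - K) * M s - M s * (K1 - K)) * E4 s" for s
  have dyn_eq: "dyn j (H1+L) s X = E3 s * X * E2 s" for s X
    unfolding dyn_def E3_def E2_def K_def by simp
  have dyn1_eq: "dyn j H1 s X = E1 s * X * E4 s" for s X
    unfolding dyn_def E1_def E4_def K1_def by simp
  have deriv: "(Bf has_vector_derivative D s) (at s within {0..t})" if "s \<in> {0..t}" for s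
  proof -
    have d1: "(E1 has_vector_derivative E1 s * K1) (at s within {0..t})"
      unfolding E1_def by (rule exp_scaleR_has_vector_derivative_right)
    have d3: "(E3 has_vector_derivative E3 s * K) (at s within {0..t})"
      unfolding E3_def by (rule exp_scaleR_has_vector_derivative_right)
    have d2: "(E2 has_vector_derivative (- K) * E2 s) (at s within {0..t})"
      unfolding E2_def by (rule has_vector_derivative_at_within[OF exp_scaleR_has_vector_derivative_left])
    have d4: "(E4 has_vector_derivative (- K1) * E4 s) (at s within {0..t})"
      unfolding E4_def by (rule has_vector_derivative_at_within[OF exp_scaleR_has_vector_derivative_left])
    have "((\<lambda>s. E1 s * E2 s * B * E3 s * E4 s) has_vector_derivative
       (E1 s * E2 s * B * E3 s * ((- K1) * E4 s) + (E1 s * E2 s * B * (E3 s * K) +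
        (E1 s * ((- K) * E2 s) + E1 s * K1 * E2 s) * B * E3 s) * E4 s)) (at s within {0..t})"
      by (intro has_vector_derivative_mult d1 d2 d3 d4 has_vector_derivative_mult_left)
    moreover have "(E1 s * E2 s * B * E3 s * ((- K1) * E4 s) + (E1 s * E2 s * B * (E3 s * K) +
        (E1 s * ((- K) * E2 s) + E1 s * K1 * E2 s) * B * E3 s) * E4 s) = D s"
    proof -
      have c1: "E4 s * K1 = K1 * E4 s" unfolding E4_def
        by (rule exp_comm) simp
      have c2: "E2 s * K = K * E2 s" unfolding E2_def
        by (rule exp_comm) simp
      have c1': "K1 * (E4 s * X) = E4 s * (K1 * X)" for X by (simp add: c1 mult.assoc[symmetric])
      have c2': "K * (E2 s * X) = E2 s * (K * X)" for X by (simp add: c2 mult.assoc[symmetric])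
      show ?thesis unfolding D_def M_def
        by (simp add: algebra_simps c1[symmetric] c2[symmetric] c1' c2')
    qed
    ultimately show ?thesis unfolding Bf_def by simp
  qed
  have Dbound: "norm (D s) \<le> norm (comm (dyn j (H1+L) s L) B)" for s
  proof -
    have "norm (D s) \<le> norm ((K1 - K) * M s - M s * (K1 - K))"
      unfolding D_def by (rule norm_conj_le[OF n1 n4])
    also have "(K1 - K) * M s - M s * (K1 - K) = - (j * (L * M s - M s * L))"
    proof -
      have kk: "K = K1 + j * L" by (simp add: K1_def K_def algebra_simps)
      have jm: "M s * (j * X) = j * (M s * X)" for X by (metis mult.assoc j_comm)
      show ?thesis unfolding kk by (simp add: algebra_simps jm)
    qed
    also have "norm (- (j * (L * M s - M s * L))) = norm (L * M s - M s * L)"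
      by (simp add: norm_j)
    also have "L * M s - M s * L = E2 s * comm (dyn j (H1+L) s L) B * E3 s"
      unfolding M_def dyn_eq comm_def
      by (simp add: algebra_simps e23 e23')
    also have "norm \<dots> \<le> norm (comm (dyn j (H1+L) s L) B)" by (rule norm_conj_le[OF n2 n3])
    finally show ?thesis .
  qed
  define gg where "gg s = g s" for s
  have mv: "norm (Bf t - Bf 0) \<le> g t - g 0"
  proof (rule mv_bound[OF t])
    fix s assume s: "s \<in> {0..t}"
    show "(Bf has_vector_derivative D s) (at s within {0..t})" by (rule deriv[OF s])
    show "(g has_real_derivative g' s) (at s within {0..t})" by (rule gd[OF s])
    show "norm (D s) \<le> g' s" by (rule order_trans[OF Dbound gb[OF s]])
  qed
  have B0: "Bf 0 = B" unfolding Bf_def E1_def E2_def E3_def E4_def by simp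
  define C' where "C' = dyn j H1 t C"
  have nC': "norm C' \<le> norm C" unfolding C'_def dyn1_eq by (rule norm_conj_le[OF n1 n4])
  have key: "comm (dyn j (H1+L) t C) B = E3 t * (E4 t * (C' * Bf t - Bf t * C') * E1 t) * E2 t"
    unfolding C'_def dyn1_eq dyn_eq comm_def Bf_def
    by (simp add: algebra_simps e23' e14' e23 e14)
  have "norm (comm (dyn j (H1+L) t C) B) \<le> norm (C' * Bf t - Bf t * C')"
    unfolding key by (meson norm_conj_le[OF n3 n2] norm_conj_le[OF n4 n1] order_trans)
  also have "C' * Bf t - Bf t * C' = comm C' B + (C' * (Bf t - B) - (Bf t - B) * C')"
    unfolding comm_def by (simp add: algebra_simps)
  also have "norm \<dots> \<le> norm (comm C' B) + norm (comm C' (Bf t - B))"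
    unfolding comm_def by (rule norm_triangle_ineq)
  also have "norm (comm C' (Bf t - B)) \<le> 2 * norm C * (g t - g 0)"
  proof -
    have "norm (comm C' (Bf t - B)) \<le> 2 * norm C' * norm (Bf t - B)" by (rule norm_comm_le)
    also have "\<dots> \<le> 2 * norm C * (g t - g 0)"
      using mv B0 nC' by (intro mult_mono) auto
    finally show ?thesis .
  qed
  finally show ?thesis unfolding C'_def by simp
qed

end


lemma sum_comm:
  fixes f :: "'b \<Rightarrow> 'a::ring"
  assumes "\<And>a. a \<in> S \<Longrightarrow> f a * y = y * f a"
  shows "sum f S * y = y * sum f S"
proof -
  have "sum f S * y = (\<Sum>a\<in>S. f a * y)" by (rule sum_distrib_right)
  also have "\<dots> = (\<Sum>a\<in>S. y * f a)" by (rule sum.cong) (use assms in auto)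
  also have "\<dots> = y * sum f S" by (rule sum_distrib_left[symmetric])
  finally show ?thesis .
qed

lemma exp_comm_scaleR:
  fixes x y :: "'a::{real_normed_algebra_1,banach}"
  assumes "x * y = y * x" shows "exp (s *\<^sub>R x) * y = y * exp (s *\<^sub>R x)"
  by (rule exp_comm) (simp add: assms)

lemma dyn_sum: "dyn j H t (sum f S) = (\<Sum>a\<in>S. dyn j H t (f a))"
  unfolding dyn_def by (simp add: sum_distrib_left sum_distrib_right)

lemma comm_sum: "comm (sum f S) B = (\<Sum>a\<in>S. comm (f a) B)"
  unfolding comm_def by (simp add: sum_distrib_left sum_distrib_right sum_subtractf)

lemma dyn_0: "dyn j H t 0 = 0" unfolding dyn_def by simp
lemma comm_0: "comm 0 B = 0" unfolding comm_def by simp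

lemma union_bound:
  fixes f :: "'b set \<Rightarrow> real"
  assumes "finite Z" "finite P" "\<And>z. z \<in> Z \<Longrightarrow> 0 \<le> f z" "\<And>z. z \<in> Z \<Longrightarrow> \<exists>x\<in>P. x \<in> z"
  shows "sum f Z \<le> (\<Sum>x\<in>P. sum f {z\<in>Z. x \<in> z})"
proof -
  have "(\<Sum>x\<in>P. sum f {z\<in>Z. x \<in> z}) = (\<Sum>x\<in>P. \<Sum>z\<in>Z. if x \<in> z then f z else 0)"
    by (rule sum.cong) (auto simp: sum.inter_filter[symmetric] assms)
  also have "\<dots> = (\<Sum>z\<in>Z. \<Sum>x\<in>P. if x \<in> z then f z else 0)" by (rule sum.swap)
  also have "\<dots> \<ge> sum f Z"
  proof (rule sum_mono)
    fix z assume z: "z \<in> Z"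
    then obtain x where x: "x \<in> P" "x \<in> z" using assms(4) by blast
    have "f z = (if x \<in> z then f z else 0)" using x by simp
    also have "\<dots> \<le> (\<Sum>x\<in>P. if x \<in> z then f z else 0)"
      by (rule member_le_sum) (use x assms z in auto)
    finally show "f z \<le> (\<Sum>x\<in>P. if x \<in> z then f z else 0)" .
  qed
  finally show ?thesis .
qed

lemma dexp: "((\<lambda>s. c * exp (k * s)) has_real_derivative c * (k * exp (k * s))) (at s within S)"
  by (auto intro!: derivative_eq_intros)

context cst begin

lemma st_sum: "st (sum f S) = (\<Sum>x\<in>S. st (f x))"
  by (induction S rule: infinite_finite_induct) (simp_all add: st_add st_0)

lemma norm_dyn: assumes "st H = H" shows "norm (dyn j H t C) \<le> norm C"
  unfolding dyn_def by (rule norm_conj_le[OF norm_U[OF assms] norm_U'[OF assms]])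

end


lemma aux1: fixes c a p e :: real assumes "c \<le> a" "0 \<le> p" shows "c + p * (e - 1) \<le> a + p * e"
proof -
  have "p * (e - 1) = p * e - p" by (simp add: algebra_simps)
  then show ?thesis using assms by linarith
qed

context cst begin

lemma jl: "x * (j * y) = j * (x * y)"
proof -
  have "x * (j * y) = (x * j) * y" by (simp add: mult.assoc)
  also have "\<dots> = (j * x) * y" by (simp only: j_comm[of x])
  finally show ?thesis by (simp add: mult.assoc)
qed

lemma main_pos:
  fixes \<Phi> :: "'g set \<Rightarrow> 'a" and \<A> :: "'g set \<Rightarrow> 'a set" and w :: "'g \<Rightarrow> real"
  assumes stP: "\<And>Z. finite Z \<Longrightarrow> st (\<Phi> Z) = \<Phi> Z"
    and PhiA: "\<And>Z. finite Z \<Longrightarrow> \<Phi> Z \<in> \<A> Z"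
    and cd: "\<And>Z V a. finite Z \<Longrightarrow> finite V \<Longrightarrow> Z \<inter> V = {} \<Longrightarrow> a \<in> \<A> V \<Longrightarrow> \<Phi> Z * a = a * \<Phi> Z"
    and mono: "\<And>X Y. finite X \<Longrightarrow> finite Y \<Longrightarrow> X \<subseteq> Y \<Longrightarrow> \<A> X \<subseteq> \<A> Y"
    and wpos: "\<And>z. 0 < w z"
    and wY: "\<And>z. z \<notin> Y \<Longrightarrow> 1 \<le> w z"
    and kap: "0 < \<kappa>"
    and kb: "\<And>x. 2 * (\<Sum>Z\<in>{Z\<in>Pow \<Lambda>. Z \<noteq> {} \<and> \<Phi> Z \<noteq> 0 \<and> x \<in> Z}. norm (\<Phi> Z) * (\<Sum>z\<in>Z. w z)) \<le> \<kappa> * w x"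
    and finX: "finite X" and finY: "finite Y" and finL: "finite \<Lambda>" and XYL: "X \<subseteq> Y \<inter> \<Lambda>"
    and A: "A \<in> \<A> X" and B: "\<forall>a\<in>\<A> Y. B * a = a * B" and T: "0 \<le> T"
  shows "norm (comm (dyn j (hamiltonian \<Phi> \<Lambda>) T A) B)
           \<le> 2 * norm A * norm B * (\<Sum>x\<in>phi_boundary \<Phi> X. w x) * exp (2 * \<kappa> * T)"
proof -
  define H where "H = hamiltonian \<Phi> \<Lambda>"
  define \<Z> where "\<Z> = {Z\<in>Pow \<Lambda>. Z \<noteq> {} \<and> \<Phi> Z \<noteq> 0}"
  define u where "u Z s = norm (comm (dyn j H s (\<Phi> Z)) B)" for Z s
  define W where "W Z = (\<Sum>z\<in>Z. w z)" for Z
  have finPow: "finite (Pow \<Lambda>)" using finL by simp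
  have finZZ: "finite \<Z>" unfolding \<Z>_def using finPow by simp
  have finZ: "finite Z" if "Z \<in> Pow \<Lambda>" for Z using that finL finite_subset by auto
  have sa: "st (\<Sum>Z\<in>S. \<Phi> Z) = (\<Sum>Z\<in>S. \<Phi> Z)" if "S \<subseteq> Pow \<Lambda>" for S
    unfolding st_sum by (rule sum.cong) (use that finZ stP in auto)
  have split: "H = (\<Sum>Z\<in>{Z\<in>Pow \<Lambda>. P Z}. \<Phi> Z) + (\<Sum>Z\<in>{Z\<in>Pow \<Lambda>. \<not> P Z}. \<Phi> Z)" for P
  proof -
    have "sum \<Phi> (Pow \<Lambda>) = sum \<Phi> ({Z\<in>Pow \<Lambda>. P Z} \<union> {Z\<in>Pow \<Lambda>. \<not> P Z})"
      by (rule arg_cong[where f="sum \<Phi>"]) auto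
    then have "H = sum \<Phi> ({Z\<in>Pow \<Lambda>. P Z} \<union> {Z\<in>Pow \<Lambda>. \<not> P Z})"
      unfolding H_def hamiltonian_def .
    also have "\<dots> = (\<Sum>Z\<in>{Z\<in>Pow \<Lambda>. P Z}. \<Phi> Z) + (\<Sum>Z\<in>{Z\<in>Pow \<Lambda>. \<not> P Z}. \<Phi> Z)"
      by (rule sum.union_disjoint) (use finPow in auto)
    finally show ?thesis .
  qed
  have saH: "st H = H" unfolding H_def hamiltonian_def by (rule sa) simp
  have u_nn: "0 \<le> u Z s" for Z s unfolding u_def by simp
  have u_le: "u Z s \<le> 2 * norm (\<Phi> Z) * norm B" for Z s
  proof -
    have "u Z s \<le> 2 * norm (dyn j H s (\<Phi> Z)) * norm B" unfolding u_def by (rule norm_comm_le)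
    also have "\<dots> \<le> 2 * norm (\<Phi> Z) * norm B"
      using norm_dyn[OF saH, of s "\<Phi> Z"] by (simp add: mult_right_mono)
    finally show ?thesis .
  qed
  have u0: "\<Phi> Z = 0 \<Longrightarrow> u Z s = 0" for Z s unfolding u_def by (simp add: dyn_0 comm_0)
  have Lsum: "norm (comm (dyn j H s (\<Sum>Z\<in>S. \<Phi> Z)) B) \<le> (\<Sum>Z\<in>S. u Z s)" for S s
    unfolding u_def dyn_sum comm_sum by (rule norm_sum)
  have Lsum': "(\<Sum>Z\<in>S. u Z s) = (\<Sum>Z\<in>{Z\<in>\<Z>. Z \<in> S}. u Z s)" if "S \<subseteq> Pow \<Lambda>" "{} \<notin> S" for S s
  proof -
    have "finite S" using that finPow finite_subset by blast
    then show ?thesis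
      by (intro sum.mono_neutral_right) (use that u0 in \<open>auto simp: \<Z>_def\<close>)
  qed
  have Wpos: "0 < W Z" if "finite Z" "Z \<noteq> {}" for Z
    unfolding W_def using that wpos by (intro sum_pos) auto
  have Wnn: "0 \<le> W Z" for Z unfolding W_def using wpos by (intro sum_nonneg) (auto intro: less_imp_le)
  have kbset: "{Z\<in>Pow \<Lambda>. Z \<noteq> {} \<and> \<Phi> Z \<noteq> 0 \<and> x \<in> Z} = {Z\<in>\<Z>. x \<in> Z}" for x
    unfolding \<Z>_def by auto
  have kbsub: "2 * (\<Sum>Z'\<in>\<Z>'. norm (\<Phi> Z') * W Z') \<le> \<kappa> * (\<Sum>x\<in>P. w x)"
    if "\<Z>' \<subseteq> \<Z>" "finite P" "\<And>Z'. Z' \<in> \<Z>' \<Longrightarrow> \<exists>x\<in>P. x \<in> Z'" for \<Z>' P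
  proof -
    have f': "finite \<Z>'" using that finZZ finite_subset by blast
    have "(\<Sum>Z'\<in>\<Z>'. norm (\<Phi> Z') * W Z') \<le> (\<Sum>x\<in>P. \<Sum>Z'\<in>{Z'\<in>\<Z>'. x \<in> Z'}. norm (\<Phi> Z') * W Z')"
      by (rule union_bound[OF f' that(2)]) (use that Wnn in auto)
    also have "\<dots> \<le> (\<Sum>x\<in>P. \<Sum>Z'\<in>{Z'\<in>\<Z>. x \<in> Z'}. norm (\<Phi> Z') * W Z')"
      by (intro sum_mono sum_mono2) (use that finZZ Wnn in auto)
    also have "\<dots> \<le> (\<Sum>x\<in>P. \<kappa> * w x / 2)"
    proof (rule sum_mono)
      fix x
      have "2 * (\<Sum>Z\<in>{Z\<in>\<Z>. x \<in> Z}. norm (\<Phi> Z) * W Z) \<le> \<kappa> * w x"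
        using kb[of x] unfolding kbset W_def .
      then show "(\<Sum>Z'\<in>{Z'\<in>\<Z>. x \<in> Z'}. norm (\<Phi> Z') * W Z') \<le> \<kappa> * w x / 2" by simp
    qed
    also have "(\<Sum>x\<in>P. \<kappa> * w x / 2) = \<kappa> * (\<Sum>x\<in>P. w x) / 2"
      by (simp add: sum_distrib_left sum_divide_distrib)
    finally show ?thesis by simp
  qed
  have PhiB: "B * \<Phi> Z = \<Phi> Z * B" if "Z \<subseteq> Y" for Z
    using B PhiA[of Z] mono[of Z Y] that finY finite_subset by blast
  have commZB: "norm (comm (\<Phi> Z) B) \<le> 2 * norm B * norm (\<Phi> Z) * W Z" if "Z \<in> \<Z>" for Z
  proof (cases "Z \<subseteq> Y")
    case True
    then have "comm (\<Phi> Z) B = 0" using PhiB[OF True] unfolding comm_def by simp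
    then show ?thesis using Wnn[of Z] by simp
  next
    case False
    then obtain z where z: "z \<in> Z" "z \<notin> Y" by blast
    have fZ: "finite Z" using that finZ unfolding \<Z>_def by blast
    have "1 \<le> w z" using wY z by blast
    also have "w z \<le> W Z" unfolding W_def
      by (rule member_le_sum) (use z fZ wpos in \<open>auto intro: less_imp_le\<close>)
    finally have W1: "1 \<le> W Z" .
    have "norm (comm (\<Phi> Z) B) \<le> 2 * norm (\<Phi> Z) * norm B" by (rule norm_comm_le)
    also have "\<dots> \<le> 2 * norm (\<Phi> Z) * norm B * W Z"
      using mult_left_mono[OF W1, of "2 * norm (\<Phi> Z) * norm B"] by simp
    finally show ?thesis by (simp add: algebra_simps)
  qed
  have step: "u Z s \<le> norm (comm (\<Phi> Z) B) + norm (\<Phi> Z) * W Z * S / 2 * (exp (2 * \<kappa> * s) - 1)"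
    if Z: "Z \<in> \<Z>" and s: "0 \<le> s" and S: "0 \<le> S"
      and hyp: "\<And>Z' \<sigma>. Z' \<in> \<Z> \<Longrightarrow> \<sigma> \<in> {0..s} \<Longrightarrow> u Z' \<sigma> \<le> norm (\<Phi> Z') * W Z' * S * exp (2 * \<kappa> * \<sigma>)"
    for Z s S
  proof -
    define L where "L = (\<Sum>Z'\<in>{Z'\<in>Pow \<Lambda>. \<not> Z' \<inter> Z = {}}. \<Phi> Z')"
    define H1 where "H1 = (\<Sum>Z'\<in>{Z'\<in>Pow \<Lambda>. Z' \<inter> Z = {}}. \<Phi> Z')"
    have HL: "H = H1 + L" unfolding H1_def L_def by (rule split)
    have saH1: "st H1 = H1" unfolding H1_def by (rule sa) auto
    have saL: "st L = L" unfolding L_def by (rule sa) auto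
    have fZ: "finite Z" using Z finZ unfolding \<Z>_def by blast
    have cH1: "H1 * \<Phi> Z = \<Phi> Z * H1" unfolding H1_def
      by (rule sum_comm) (use finZ fZ PhiA cd in blast)
    have cjH1: "(j * H1) * \<Phi> Z = \<Phi> Z * (j * H1)"
      by (metis cH1 j_comm mult.assoc)
    have dynZ: "dyn j H1 s (\<Phi> Z) = \<Phi> Z"
    proof -
      have "exp (s *\<^sub>R (j * H1)) * \<Phi> Z = \<Phi> Z * exp (s *\<^sub>R (j * H1))"
        by (rule exp_comm_scaleR[OF cjH1])
      then show ?thesis unfolding dyn_def
        by (simp add: mult.assoc exp_minus_inverse)
    qed
    define g where "g \<sigma> = W Z * S / 4 * exp (2 * \<kappa> * \<sigma>)" for \<sigma>
    define g' where "g' \<sigma> = W Z * S / 4 * (2*\<kappa> * exp (2 * \<kappa> * \<sigma>))" for \<sigma>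
    have "u Z s \<le> norm (comm (dyn j H1 s (\<Phi> Z)) B) + 2 * norm (\<Phi> Z) * (g s - g 0)"
      unfolding u_def HL
    proof (rule duhamel[OF saH1 saL s])
      fix \<sigma> assume \<sigma>: "\<sigma> \<in> {0..s}"
      show "(g has_real_derivative g' \<sigma>) (at \<sigma> within {0..s})"
        unfolding g_def g'_def by (rule dexp)
      have "norm (comm (dyn j (H1 + L) \<sigma> L) B) \<le> (\<Sum>Z'\<in>{Z'\<in>Pow \<Lambda>. \<not> Z' \<inter> Z = {}}. u Z' \<sigma>)"
        unfolding HL[symmetric] unfolding L_def by (rule Lsum)
      also have "\<dots> = (\<Sum>Z'\<in>{Z'\<in>\<Z>. Z' \<inter> Z \<noteq> {}}. u Z' \<sigma>)"
        by (subst Lsum') (auto intro!: sum.cong simp: \<Z>_def)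
      also have "\<dots> \<le> (\<Sum>Z'\<in>{Z'\<in>\<Z>. Z' \<inter> Z \<noteq> {}}. norm (\<Phi> Z') * W Z' * S * exp (2 * \<kappa> * \<sigma>))"
        by (rule sum_mono) (use hyp \<sigma> in auto)
      also have "\<dots> = S * exp (2 * \<kappa> * \<sigma>) * (\<Sum>Z'\<in>{Z'\<in>\<Z>. Z' \<inter> Z \<noteq> {}}. norm (\<Phi> Z') * W Z')"
        by (simp add: sum_distrib_left algebra_simps)
      also have "\<dots> \<le> S * exp (2 * \<kappa> * \<sigma>) * (\<kappa> * W Z / 2)"
      proof (rule mult_left_mono)
        have "2 * (\<Sum>Z'\<in>{Z'\<in>\<Z>. Z' \<inter> Z \<noteq> {}}. norm (\<Phi> Z') * W Z') \<le> \<kappa> * (\<Sum>x\<in>Z. w x)"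
          by (rule kbsub) (use fZ in auto)
        then show "(\<Sum>Z'\<in>{Z'\<in>\<Z>. Z' \<inter> Z \<noteq> {}}. norm (\<Phi> Z') * W Z') \<le> \<kappa> * W Z / 2"
          unfolding W_def by simp
      qed (use S in simp)
      also have "\<dots> = g' \<sigma>" unfolding g'_def by (simp add: algebra_simps)
      finally show "norm (comm (dyn j (H1 + L) \<sigma> L) B) \<le> g' \<sigma>" .
    qed
    also have "\<dots> = norm (comm (\<Phi> Z) B) + norm (\<Phi> Z) * W Z * S / 2 * (exp (2 * \<kappa> * s) - 1)"
      unfolding dynZ g_def by (simp add: field_simps)
    finally show ?thesis .
  qed
  have pw_pos: "0 < norm (\<Phi> Z) * W Z" if "Z \<in> \<Z>" for Z
    using that Wpos finZ unfolding \<Z>_def by auto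
  have bnd: "u Z s \<le> norm (\<Phi> Z) * W Z * (4 * norm B) * exp (2 * \<kappa> * s)"
    if Z: "Z \<in> \<Z>" and s: "s \<in> {0..T}" for Z s
  proof -
    define ratio where "ratio Z s = u Z s / (norm (\<Phi> Z) * W Z) * exp (- (2 * \<kappa> * s))" for Z s
    define P where "P = {ratio Z s | Z s. Z \<in> \<Z> \<and> s \<in> {0..T}}"
    define S where "S = Sup P"
    have ne: "P \<noteq> {}" unfolding P_def using Z s by blast
    have bdd: "bdd_above P"
    proof (rule bdd_aboveI)
      fix r assume "r \<in> P"
      then obtain Z s where r: "r = ratio Z s" and Z: "Z \<in> \<Z>" and s: "s \<in> {0..T}"
        unfolding P_def by blast
      have "r \<le> u Z s / (norm (\<Phi> Z) * W Z)"
        unfolding r ratio_def using s kap u_nn pw_pos[OF Z]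
        by (intro mult_left_le) (auto simp: divide_nonneg_pos)
      also have "\<dots> \<le> 2 * norm (\<Phi> Z) * norm B / (norm (\<Phi> Z) * W Z)"
        by (rule divide_right_mono[OF u_le]) (use pw_pos[OF Z] in simp)
      also have "\<dots> = 2 * norm B / W Z" using pw_pos[OF Z] by (auto simp: field_simps)
      also have "\<dots> \<le> (\<Sum>Z'\<in>\<Z>. 2 * norm B / W Z')"
        by (rule member_le_sum) (use Z finZZ Wnn in auto)
      finally show "r \<le> (\<Sum>Z'\<in>\<Z>. 2 * norm B / W Z')" .
    qed
    have up: "ratio Z s \<le> S" if "Z \<in> \<Z>" "s \<in> {0..T}" for Z s
      unfolding S_def by (rule cSup_upper[OF _ bdd]) (use that P_def in blast)
    have rnn: "0 \<le> ratio Z s" if "Z \<in> \<Z>" for Z s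
      unfolding ratio_def using u_nn pw_pos[OF that] by simp
    have S0: "0 \<le> S" using rnn[OF Z, of s] up[OF Z s] by linarith
    have hyp: "u Z s \<le> norm (\<Phi> Z) * W Z * S * exp (2 * \<kappa> * s)" if "Z \<in> \<Z>" "s \<in> {0..T}" for Z s
    proof -
      have q: "0 < norm (\<Phi> Z) * W Z * exp (2 * \<kappa> * s)" using pw_pos[OF that(1)] by simp
      have "ratio Z s = u Z s / (norm (\<Phi> Z) * W Z * exp (2 * \<kappa> * s))"
        unfolding ratio_def by (simp add: exp_minus divide_inverse mult.assoc)
      then have "u Z s / (norm (\<Phi> Z) * W Z * exp (2 * \<kappa> * s)) \<le> S" using up[OF that] by simp
      then show ?thesis using pos_divide_le_eq[OF q] by (simp add: mult.commute mult.left_commute)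
    qed
    have "Sup P \<le> 2 * norm B + S / 2"
    proof (rule cSup_least[OF ne])
      fix r assume "r \<in> P"
      then obtain Z s where r: "r = ratio Z s" and Z: "Z \<in> \<Z>" and s: "s \<in> {0..T}"
        unfolding P_def by blast
      have "u Z s \<le> norm (comm (\<Phi> Z) B) + norm (\<Phi> Z) * W Z * S / 2 * (exp (2 * \<kappa> * s) - 1)"
        by (rule step[OF Z _ S0]) (use s hyp in auto)
      also have "\<dots> \<le> 2 * norm B * norm (\<Phi> Z) * W Z + norm (\<Phi> Z) * W Z * S / 2 * exp (2 * \<kappa> * s)"
        by (rule aux1[OF commZB[OF Z]]) (use pw_pos[OF Z] S0 in simp)
      finally have "u Z s \<le> norm (\<Phi> Z) * W Z * (2 * norm B + S / 2 * exp (2 * \<kappa> * s))"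
        by (simp add: field_simps)
      then have "ratio Z s \<le> (2 * norm B + S / 2 * exp (2 * \<kappa> * s)) * exp (- (2 * \<kappa> * s))"
        unfolding ratio_def using pw_pos[OF Z]
        by (intro mult_right_mono) (simp_all add: divide_le_eq mult.commute)
      also have "\<dots> = 2 * norm B * exp (- (2 * \<kappa> * s)) + S / 2"
        by (simp add: algebra_simps exp_minus_inverse exp_add[symmetric])
      also have "\<dots> \<le> 2 * norm B + S / 2"
        using s kap by (simp add: mult_left_le)
      finally have "ratio Z s \<le> 2 * norm B + S / 2" .
      then show "r \<le> 2 * norm B + S / 2" using r by simp
    qed
    then have "S \<le> 4 * norm B" unfolding S_def[symmetric] by simp
    then show ?thesis using hyp[OF Z s] pw_pos[OF Z]
      by (smt (verit, best) exp_gt_zero mult_left_mono mult_right_mono)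
  qed
  define P0 where "P0 Z \<longleftrightarrow> Z \<subseteq> X \<or> Z \<inter> X = {}" for Z
  define L where "L = (\<Sum>Z\<in>{Z\<in>Pow \<Lambda>. \<not> P0 Z}. \<Phi> Z)"
  define H1 where "H1 = (\<Sum>Z\<in>{Z\<in>Pow \<Lambda>. P0 Z}. \<Phi> Z)"
  define Hin where "Hin = (\<Sum>Z\<in>{Z\<in>Pow \<Lambda>. Z \<subseteq> X}. \<Phi> Z)"
  define Hout where "Hout = (\<Sum>Z\<in>{Z\<in>Pow \<Lambda>. \<not> Z \<subseteq> X \<and> Z \<inter> X = {}}. \<Phi> Z)"
  have HL: "H = H1 + L" unfolding H1_def L_def by (rule split)
  have saH1: "st H1 = H1" unfolding H1_def by (rule sa) auto
  have saL: "st L = L" unfolding L_def by (rule sa) auto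
  have H1io: "H1 = Hin + Hout"
  proof -
    have "sum \<Phi> {Z\<in>Pow \<Lambda>. P0 Z} = sum \<Phi> ({Z\<in>Pow \<Lambda>. Z \<subseteq> X} \<union> {Z\<in>Pow \<Lambda>. \<not> Z \<subseteq> X \<and> Z \<inter> X = {}})"
      by (rule arg_cong[where f="sum \<Phi>"]) (auto simp: P0_def)
    then have "H1 = sum \<Phi> ({Z\<in>Pow \<Lambda>. Z \<subseteq> X} \<union> {Z\<in>Pow \<Lambda>. \<not> Z \<subseteq> X \<and> Z \<inter> X = {}})"
      unfolding H1_def .
    also have "\<dots> = Hin + Hout" unfolding Hin_def Hout_def
      by (rule sum.union_disjoint) (use finPow in auto)
    finally show ?thesis .
  qed
  have cOutA: "Hout * A = A * Hout" unfolding Hout_def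
  proof (rule sum_comm)
    fix Z assume Z: "Z \<in> {Z\<in>Pow \<Lambda>. \<not> Z \<subseteq> X \<and> Z \<inter> X = {}}"
    show "\<Phi> Z * A = A * \<Phi> Z" by (rule cd[of Z X A]) (use Z finZ finX A in auto)
  qed
  have cInOut: "Hin * Hout = Hout * Hin" unfolding Hin_def
  proof (rule sum_comm)
    fix Z1 assume Z1: "Z1 \<in> {Z\<in>Pow \<Lambda>. Z \<subseteq> X}"
    have "Hout * \<Phi> Z1 = \<Phi> Z1 * Hout" unfolding Hout_def
    proof (rule sum_comm)
      fix Z2 assume Z2: "Z2 \<in> {Z\<in>Pow \<Lambda>. \<not> Z \<subseteq> X \<and> Z \<inter> X = {}}"
      show "\<Phi> Z2 * \<Phi> Z1 = \<Phi> Z1 * \<Phi> Z2"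
      proof (rule cd[of Z2 Z1])
        show "finite Z2" "finite Z1" using Z1 Z2 finZ by auto
        show "Z2 \<inter> Z1 = {}" using Z1 Z2 by auto
        show "\<Phi> Z1 \<in> \<A> Z1" using PhiA \<open>finite Z1\<close> by blast
      qed
    qed
    then show "\<Phi> Z1 * Hout = Hout * \<Phi> Z1" by simp
  qed
  have "Hin * B = B * Hin" unfolding Hin_def
  proof (rule sum_comm)
    fix Z assume Z: "Z \<in> {Z\<in>Pow \<Lambda>. Z \<subseteq> X}"
    have "B * \<Phi> Z = \<Phi> Z * B" by (rule PhiB) (use Z XYL in auto)
    then show "\<Phi> Z * B = B * \<Phi> Z" by simp
  qed
  then have cBIn: "B * Hin = Hin * B" by simp
  have cBA: "B * A = A * B"
  proof -
    have "A \<in> \<A> Y" using A mono[OF finX finY] XYL by auto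
    then show ?thesis using B by blast
  qed
  have dyn1: "comm (dyn j H1 T A) B = 0"
  proof -
    define a where "a = T *\<^sub>R (j * Hin)"
    define b where "b = T *\<^sub>R (j * Hout)"
    have ab: "a * b = b * a" unfolding a_def b_def
      by (simp add: mult.assoc jl[of Hin] jl[of Hout] cInOut)
    have eab: "exp (T *\<^sub>R (j * H1)) = exp a * exp b"
      unfolding H1io a_def b_def by (simp add: distrib_left scaleR_right_distrib exp_add_commuting[OF ab[unfolded a_def b_def]])
    have emab: "exp (- (T *\<^sub>R (j * H1))) = exp (- b) * exp (- a)"
    proof -
      have "(- b) * (- a) = (- a) * (- b)" using ab by simp
      then have "exp (- b + - a) = exp (- b) * exp (- a)" by (rule exp_add_commuting)
      moreover have "- (T *\<^sub>R (j * H1)) = - b + - a" unfolding H1io a_def b_def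
        by (simp add: distrib_left scaleR_right_distrib)
      ultimately show ?thesis by simp
    qed
    have bA: "exp b * A = A * exp b" unfolding b_def
      by (rule exp_comm_scaleR) (simp add: mult.assoc jl[of A] cOutA)
    have dA: "dyn j H1 T A = exp a * A * exp (- a)"
    proof -
      have bA': "exp b * (A * X) = A * (exp b * X)" for X using bA by (simp add: mult.assoc[symmetric])
      have ebb: "exp b * (exp (- b) * X) = X" for X by (simp add: mult.assoc[symmetric] exp_minus_inverse)
      show ?thesis unfolding dyn_def eab emab by (simp add: mult.assoc bA' ebb)
    qed
    have B1: "B * exp a = exp a * B" unfolding a_def
      by (rule exp_comm_scaleR[symmetric]) (simp add: mult.assoc jl[of B] cBIn[symmetric])
    have B2: "B * exp (- a) = exp (- a) * B" unfolding a_def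
      using exp_comm_scaleR[of "j * Hin" B "- T"] by (simp add: mult.assoc jl[of B] cBIn[symmetric])
    have "B * (exp a * A * exp (- a)) = (B * exp a) * (A * exp (- a))" by (simp only: mult.assoc)
    also have "\<dots> = (exp a * B) * (A * exp (- a))" by (simp only: B1)
    also have "\<dots> = exp a * ((B * A) * exp (- a))" by (simp only: mult.assoc)
    also have "\<dots> = exp a * ((A * B) * exp (- a))" by (simp only: cBA)
    also have "\<dots> = exp a * (A * (B * exp (- a)))" by (simp only: mult.assoc)
    also have "\<dots> = exp a * A * exp (- a) * B" by (simp only: B2 mult.assoc)
    finally show ?thesis unfolding comm_def dA by simp
  qed
  define Q where "Q = (\<Sum>Z'\<in>{Z'\<in>\<Z>. \<not> P0 Z'}. norm (\<Phi> Z') * W Z')"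
  define g where "g \<sigma> = 4 * norm B * Q / (2 * \<kappa>) * exp (2 * \<kappa> * \<sigma>)" for \<sigma>
  define g' where "g' \<sigma> = 4 * norm B * Q / (2 * \<kappa>) * (2 * \<kappa> * exp (2 * \<kappa> * \<sigma>))" for \<sigma>
  have Q0: "0 \<le> Q" unfolding Q_def using Wnn by (intro sum_nonneg) simp
  have "norm (comm (dyn j H T A) B) \<le> norm (comm (dyn j H1 T A) B) + 2 * norm A * (g T - g 0)"
    unfolding HL
  proof (rule duhamel[OF saH1 saL T])
    fix \<sigma> assume \<sigma>: "\<sigma> \<in> {0..T}"
    show "(g has_real_derivative g' \<sigma>) (at \<sigma> within {0..T})"
      unfolding g_def g'_def by (rule dexp)
    have "norm (comm (dyn j (H1 + L) \<sigma> L) B) \<le> (\<Sum>Z'\<in>{Z'\<in>Pow \<Lambda>. \<not> P0 Z'}. u Z' \<sigma>)"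
      unfolding HL[symmetric] unfolding L_def by (rule Lsum)
    also have "\<dots> = (\<Sum>Z'\<in>{Z'\<in>\<Z>. \<not> P0 Z'}. u Z' \<sigma>)"
      by (subst Lsum') (auto intro!: sum.cong simp: \<Z>_def P0_def)
    also have "\<dots> \<le> (\<Sum>Z'\<in>{Z'\<in>\<Z>. \<not> P0 Z'}. norm (\<Phi> Z') * W Z' * (4 * norm B) * exp (2 * \<kappa> * \<sigma>))"
      by (rule sum_mono) (use bnd \<sigma> in auto)
    also have "\<dots> = 4 * norm B * exp (2 * \<kappa> * \<sigma>) * Q"
      unfolding Q_def by (simp add: sum_distrib_left algebra_simps)
    also have "\<dots> = g' \<sigma>" unfolding g'_def using kap by (simp add: field_simps)
    finally show "norm (comm (dyn j (H1 + L) \<sigma> L) B) \<le> g' \<sigma>" .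
  qed
  also have "\<dots> \<le> 2 * norm A * (4 * norm B * Q / (2 * \<kappa>) * exp (2 * \<kappa> * T))"
  proof -
    have c0: "0 \<le> 4 * norm B * Q / (2 * \<kappa>)" using Q0 kap by simp
    have "g T - g 0 \<le> 4 * norm B * Q / (2 * \<kappa>) * exp (2 * \<kappa> * T)" unfolding g_def using c0 by simp
    then have "2 * norm A * (g T - g 0) \<le> 2 * norm A * (4 * norm B * Q / (2 * \<kappa>) * exp (2 * \<kappa> * T))"
      by (rule mult_left_mono) simp
    then show ?thesis unfolding dyn1 by simp
  qed
  also have "\<dots> = 2 * norm B * norm A * exp (2 * \<kappa> * T) / \<kappa> * (2 * Q)"
    using kap by (simp add: field_simps)
  also have "\<dots> \<le> 2 * norm B * norm A * exp (2 * \<kappa> * T) / \<kappa> * (\<kappa> * (\<Sum>x\<in>phi_boundary \<Phi> X. w x))"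
  proof (rule mult_left_mono)
    show "2 * Q \<le> \<kappa> * (\<Sum>x\<in>phi_boundary \<Phi> X. w x)" unfolding Q_def
    proof (rule kbsub)
      show "finite (phi_boundary \<Phi> X)" using finX unfolding phi_boundary_def by simp
      fix Z' assume "Z' \<in> {Z' \<in> \<Z>. \<not> P0 Z'}"
      then have Z': "Z' \<in> \<Z>" "\<not> Z' \<subseteq> X" "Z' \<inter> X \<noteq> {}" unfolding P0_def by auto
      then obtain x where x: "x \<in> Z'" "x \<in> X" by blast
      have "x \<in> phi_boundary \<Phi> X" unfolding phi_boundary_def
        using x Z' finZ unfolding \<Z>_def by blast
      then show "\<exists>x\<in>phi_boundary \<Phi> X. x \<in> Z'" using x by blast
    qed auto
  qed (use kap in simp)
  also have "\<dots> = 2 * norm A * norm B * (\<Sum>x\<in>phi_boundary \<Phi> X. w x) * exp (2 * \<kappa> * T)"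
    using kap by (simp add: field_simps)
  finally show ?thesis unfolding H_def .
qed

end


lemma finsum_le_infsum:
  fixes f :: "'b \<Rightarrow> real"
  assumes "finite S" "S \<subseteq> U" "f summable_on U" "\<And>x. x \<in> U \<Longrightarrow> 0 \<le> f x"
  shows "sum f S \<le> infsum f U"
proof -
  have "infsum f S \<le> infsum f U"
    by (rule infsum_mono_neutral) (use assms in auto)
  then show ?thesis using assms(1) by simp
qed

lemma sd_self:
  assumes nn: "\<forall>x y. 0 \<le> d x y" and dz: "d z z = 0" and z: "z \<notin> Y"
  shows "setdist_d d {z} (- Y) \<le> 0"
proof -
  have "Inf {d x y |x y. x \<in> {z} \<and> y \<in> - Y} \<le> d z z"
    by (rule cInf_lower) (use z nn in \<open>auto intro!: bdd_belowI[where m=0]\<close>)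
  then show ?thesis unfolding setdist_d_def using dz by simp
qed

lemma sd_lip:
  assumes nn: "\<forall>x y. 0 \<le> d x y" and tri: "\<forall>x y z. d x z \<le> d x y + d y z"
  shows "setdist_d d {x} (- Y) \<le> setdist_d d {z} (- Y) + d x z"
proof (cases "- Y = {}")
  case True
  then have "{d a b |a b. a \<in> {x} \<and> b \<in> - Y} = {d a b |a b. a \<in> {z} \<and> b \<in> - Y}" by simp
  then show ?thesis unfolding setdist_d_def using nn by simp
next
  case False
  define Sx where "Sx = {d a b |a b. a \<in> {x} \<and> b \<in> - Y}"
  define Sz where "Sz = {d a b |a b. a \<in> {z} \<and> b \<in> - Y}"
  have bx: "bdd_below Sx" unfolding Sx_def using nn by (auto intro!: bdd_belowI[where m=0])
  have nz: "Sz \<noteq> {}" unfolding Sz_def using False by auto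
  have "Inf Sx - d x z \<le> Inf Sz"
  proof (rule cInf_greatest[OF nz])
    fix e assume "e \<in> Sz"
    then obtain y where y: "y \<in> - Y" "e = d z y" unfolding Sz_def by auto
    have "Inf Sx \<le> d x y" by (rule cInf_lower[OF _ bx]) (use y Sx_def in auto)
    also have "\<dots> \<le> d x z + d z y" using tri by blast
    finally show "Inf Sx - d x z \<le> e" using y by simp
  qed
  then show ?thesis unfolding setdist_d_def Sx_def Sz_def by simp
qed

lemma sd_mono:
  assumes nn: "\<forall>x y. 0 \<le> d x y" and x: "x \<in> X"
  shows "setdist_d d X (- Y) \<le> setdist_d d {x} (- Y)"
proof (cases "- Y = {}")
  case True
  then have "{d a b |a b. a \<in> X \<and> b \<in> - Y} = {d a b |a b. a \<in> {x} \<and> b \<in> - Y}" by simp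
  then show ?thesis unfolding setdist_d_def by simp
next
  case False
  define SX where "SX = {d a b |a b. a \<in> X \<and> b \<in> - Y}"
  define Sx where "Sx = {d a b |a b. a \<in> {x} \<and> b \<in> - Y}"
  have bX: "bdd_below SX" unfolding SX_def using nn by (auto intro!: bdd_belowI[where m=0])
  have nx: "Sx \<noteq> {}" unfolding Sx_def using False by auto
  have "Inf SX \<le> Inf Sx"
  proof (rule cInf_greatest[OF nx])
    fix e assume "e \<in> Sx"
    then have "e \<in> SX" unfolding Sx_def SX_def using x by auto
    then show "Inf SX \<le> e" by (rule cInf_lower[OF _ bX])
  qed
  then show ?thesis unfolding setdist_d_def SX_def Sx_def by simp
qed

lemma diam_le:
  assumes "finite Z" "z \<in> Z" "z' \<in> Z"
  shows "d z z' \<le> diam_d d Z"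
proof -
  have fin: "finite {d x y |x y. x \<in> Z \<and> y \<in> Z}"
  proof -
    have "{d x y |x y. x \<in> Z \<and> y \<in> Z} = (\<lambda>(x,y). d x y) ` (Z \<times> Z)" by auto
    then show ?thesis using assms(1) by simp
  qed
  have "d z z' \<le> Sup {d x y |x y. x \<in> Z \<and> y \<in> Z}"
    by (rule cSup_upper) (use assms fin in \<open>auto intro: bdd_above_finite\<close>)
  then show ?thesis unfolding diam_d_def using assms by auto
qed

theorem corollary2p2:
  fixes d :: "'g \<Rightarrow> 'g \<Rightarrow> real"
    and st :: "'a::{real_normed_algebra_1,banach} \<Rightarrow> 'a"
    and j :: "'a"
    and \<A> :: "'g set \<Rightarrow> 'a set"
    and \<Phi> :: "'g set \<Rightarrow> 'a"
  assumes "countable_discrete_metric d"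
    and "\<exists>F. is_F_function d F"
    and "qmb_system st j \<A> \<Phi>"
    and "A1 st j \<A> \<Phi>"
    and "bounded_interaction \<Phi>"
    and "finite_range d \<Phi>"
  shows "\<forall>\<mu>>0. \<exists>c v. c > 0 \<and> v > 0 \<and>
           (\<forall>X Y \<Lambda> A B t. finite X \<longrightarrow> finite Y \<longrightarrow> finite \<Lambda> \<longrightarrow> X \<subseteq> Y \<inter> \<Lambda> \<longrightarrow>
              A \<in> \<A> X \<longrightarrow> (\<forall>a\<in>\<A> Y. B * a = a * B) \<longrightarrow>
              norm (dynamics j \<Phi> \<Lambda> t A * B - B * dynamics j \<Phi> \<Lambda> t A)
                \<le> c * norm A * norm B * real (card (phi_boundary \<Phi> X))
                    * exp (- \<mu> * (setdist_d d X (- Y) - v * \<bar>t\<bar>)))"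
proof -
  have met: "metric_on d" using assms(1) unfolding countable_discrete_metric_def by blast
  have nn: "\<forall>x y. 0 \<le> d x y" and d0: "\<And>x. d x x = 0" and dsym: "\<And>x y. d x y = d y x"
    and tri: "\<forall>x y z. d x z \<le> d x y + d y z"
    using met unfolding metric_on_def by auto
  obtain F where F: "is_F_function d F" using assms(2) by blast
  have Fpos: "\<And>r. 0 \<le> r \<Longrightarrow> 0 < F r" and Fmono: "\<And>r s. 0 \<le> r \<Longrightarrow> r \<le> s \<Longrightarrow> F s \<le> F r"
    using F unfolding is_F_function_def by auto
  obtain CF where CF: "\<And>x. (\<lambda>y. F (d x y)) summable_on UNIV \<and> (\<Sum>\<^sub>\<infinity>y. F (d x y)) \<le> CF"
    using F unfolding is_F_function_def by blast
  have qmb: "unital_cstar_algebra st j" and mono: "\<And>X Y. finite X \<Longrightarrow> finite Y \<Longrightarrow> X \<subseteq> Y \<Longrightarrow> \<A> X \<subseteq> \<A> Y"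
    and stP: "\<And>Z. finite Z \<Longrightarrow> st (\<Phi> Z) = \<Phi> Z" and PhiA: "\<And>Z. finite Z \<Longrightarrow> \<Phi> Z \<in> \<A> Z"
    using assms(3) unfolding qmb_system_def by auto
  interpret cst st j using qmb by (simp add: cst_def)
  have cd: "\<Phi> Z * a = a * \<Phi> Z" if "finite Z" "finite V" "Z \<inter> V = {}" "a \<in> \<A> V" for Z V a
  proof -
    have "a \<in> local_alg st j \<A> (- Z)"
      unfolding local_alg_def cstar_generated_def using that by blast
    then show ?thesis using assms(4) that(1) unfolding A1_def by blast
  qed
  obtain Cb where Cb: "\<And>x. (\<lambda>X. norm (\<Phi> X) / real (card X)) summable_on {X. finite X \<and> x \<in> X} \<and>
              (\<Sum>\<^sub>\<infinity>X\<in>{X. finite X \<and> x \<in> X}. norm (\<Phi> X) / real (card X)) \<le> Cb"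
    using assms(5) unfolding bounded_interaction_def by blast
  obtain r where r: "r > 0" "\<And>X. finite X \<Longrightarrow> diam_d d X > r \<Longrightarrow> \<Phi> X = 0"
    using assms(6) unfolding finite_range_def by blast
  show ?thesis
  proof (intro allI impI)
    fix \<mu> :: real assume mu: "\<mu> > 0"
    define N where "N = CF / F r"
    define Cb' where "Cb' = max Cb 0"
    define \<kappa> where "\<kappa> = 2 * exp (\<mu> * r) * (N\<^sup>2 * Cb' + 1)"
    have "0 \<le> N\<^sup>2 * Cb'" unfolding Cb'_def by simp
    then have "0 < N\<^sup>2 * Cb' + 1" by simp
    then have kap: "0 < \<kappa>" unfolding \<kappa>_def by simp
    show "\<exists>c v. c > 0 \<and> v > 0 \<and>
           (\<forall>X Y \<Lambda> A B t. finite X \<longrightarrow> finite Y \<longrightarrow> finite \<Lambda> \<longrightarrow> X \<subseteq> Y \<inter> \<Lambda> \<longrightarrow>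
              A \<in> \<A> X \<longrightarrow> (\<forall>a\<in>\<A> Y. B * a = a * B) \<longrightarrow>
              norm (dynamics j \<Phi> \<Lambda> t A * B - B * dynamics j \<Phi> \<Lambda> t A)
                \<le> c * norm A * norm B * real (card (phi_boundary \<Phi> X))
                    * exp (- \<mu> * (setdist_d d X (- Y) - v * \<bar>t\<bar>)))"
    proof (intro exI conjI allI impI)
      show "(2::real) > 0" by simp
      show "2 * \<kappa> / \<mu> > 0" using kap mu by simp
      fix X Y \<Lambda> A B t
      assume finX: "finite X" and finY: "finite Y" and finL: "finite \<Lambda>" and XYL: "X \<subseteq> Y \<inter> \<Lambda>"
        and A: "A \<in> \<A> X" and B: "\<forall>a\<in>\<A> Y. B * a = a * B"
      define dist where "dist z = setdist_d d {z} (- Y)" for z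
      define w where "w z = exp (- \<mu> * dist z)" for z
      have wpos: "0 < w z" for z unfolding w_def by simp
      have wY: "1 \<le> w z" if "z \<notin> Y" for z
      proof -
        have "dist z \<le> 0" unfolding dist_def by (rule sd_self[OF nn d0 that])
        then have "0 \<le> - \<mu> * dist z" using mu by (simp add: mult_le_0_iff)
        then show ?thesis unfolding w_def by simp
      qed
      have wlip: "w z \<le> exp (\<mu> * d x z) * w x" for x z
      proof -
        have "dist x \<le> dist z + d x z" unfolding dist_def by (rule sd_lip[OF nn tri])
        then have "\<mu> * dist x \<le> \<mu> * (dist z + d x z)" using mu by (simp add: mult_left_mono)
        then have "- \<mu> * dist z \<le> \<mu> * d x z + - \<mu> * dist x" by (simp add: algebra_simps)
        then have "exp (- \<mu> * dist z) \<le> exp (\<mu> * d x z + - \<mu> * dist x)" by (simp only: exp_le_cancel_iff)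
        then show ?thesis unfolding w_def by (simp only: exp_add)
      qed
      have dist_le: "d x z \<le> r" if "Z \<in> Pow \<Lambda>" "\<Phi> Z \<noteq> 0" "x \<in> Z" "z \<in> Z" for Z x z
      proof -
        have fZ: "finite Z" using that finL finite_subset by auto
        have "\<not> diam_d d Z > r" using r(2)[OF fZ] that by blast
        then show ?thesis using diam_le[OF fZ that(3,4), of d] by simp
      qed
      have card_le: "real (card Z) \<le> N" if "Z \<in> Pow \<Lambda>" "\<Phi> Z \<noteq> 0" "x \<in> Z" for Z x
      proof -
        have fZ: "finite Z" using that finL finite_subset by auto
        have "real (card Z) * F r = (\<Sum>z\<in>Z. F r)" by simp
        also have "\<dots> \<le> (\<Sum>z\<in>Z. F (d x z))"
          by (rule sum_mono) (use Fmono nn dist_le[OF that] in auto)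
        also have "\<dots> \<le> (\<Sum>\<^sub>\<infinity>y. F (d x y))"
          by (rule finsum_le_infsum) (use fZ CF Fpos nn in \<open>auto intro: less_imp_le\<close>)
        also have "\<dots> \<le> CF" using CF by blast
        finally show ?thesis unfolding N_def using Fpos[of r] r(1) by (simp add: pos_le_divide_eq)
      qed
      have kb: "2 * (\<Sum>Z\<in>{Z\<in>Pow \<Lambda>. Z \<noteq> {} \<and> \<Phi> Z \<noteq> 0 \<and> x \<in> Z}. norm (\<Phi> Z) * (\<Sum>z\<in>Z. w z)) \<le> \<kappa> * w x" for x
      proof -
        define Sx where "Sx = {Z\<in>Pow \<Lambda>. Z \<noteq> {} \<and> \<Phi> Z \<noteq> 0 \<and> x \<in> Z}"
        define E where "E = exp (\<mu> * r) * w x"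
        have E0: "0 \<le> E" unfolding E_def using wpos by (simp add: less_imp_le)
        have finSx: "finite Sx" unfolding Sx_def using finL by simp
        have each: "norm (\<Phi> Z) * (\<Sum>z\<in>Z. w z) \<le> norm (\<Phi> Z) / real (card Z) * (N\<^sup>2 * E)" if Z: "Z \<in> Sx" for Z
        proof -
          have Zp: "Z \<in> Pow \<Lambda>" "\<Phi> Z \<noteq> 0" "x \<in> Z" using Z unfolding Sx_def by auto
          have fZ: "finite Z" using Zp finL finite_subset by auto
          have cpos: "0 < real (card Z)" using fZ Zp(3) card_gt_0_iff by fastforce
          have "(\<Sum>z\<in>Z. w z) \<le> (\<Sum>z\<in>Z. E)"
          proof (rule sum_mono)
            fix z assume z: "z \<in> Z"
            have "w z \<le> exp (\<mu> * d x z) * w x" by (rule wlip)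
            also have "\<dots> \<le> exp (\<mu> * r) * w x"
              using dist_le[OF Zp z] mu wpos[of x] by (simp add: mult_right_mono)
            finally show "w z \<le> E" unfolding E_def .
          qed
          also have "\<dots> = real (card Z) * E" by simp
          finally have W: "(\<Sum>z\<in>Z. w z) \<le> real (card Z) * E" .
          have c2: "real (card Z) * real (card Z) \<le> N\<^sup>2"
            using card_le[OF Zp] cpos by (simp add: power2_eq_square mult_mono)
          have "norm (\<Phi> Z) * (\<Sum>z\<in>Z. w z) \<le> norm (\<Phi> Z) * (real (card Z) * E)"
            using W by (simp add: mult_left_mono)
          also have "\<dots> = norm (\<Phi> Z) / real (card Z) * (real (card Z) * real (card Z) * E)"
            using cpos by (simp add: field_simps)
          also have "\<dots> \<le> norm (\<Phi> Z) / real (card Z) * (N\<^sup>2 * E)"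
            using c2 E0 cpos by (intro mult_left_mono mult_right_mono) auto
          finally show ?thesis .
        qed
        have "(\<Sum>Z\<in>Sx. norm (\<Phi> Z) * (\<Sum>z\<in>Z. w z)) \<le> (\<Sum>Z\<in>Sx. norm (\<Phi> Z) / real (card Z) * (N\<^sup>2 * E))"
          by (rule sum_mono) (rule each)
        also have "\<dots> = (\<Sum>Z\<in>Sx. norm (\<Phi> Z) / real (card Z)) * (N\<^sup>2 * E)"
          by (simp add: sum_distrib_right)
        also have "\<dots> \<le> Cb' * (N\<^sup>2 * E)"
        proof (rule mult_right_mono)
          have "(\<Sum>Z\<in>Sx. norm (\<Phi> Z) / real (card Z)) \<le> (\<Sum>\<^sub>\<infinity>X\<in>{X. finite X \<and> x \<in> X}. norm (\<Phi> X) / real (card X))"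
            by (rule finsum_le_infsum) (use finSx Cb finL finite_subset in \<open>auto simp: Sx_def\<close>)
          also have "\<dots> \<le> Cb" using Cb by blast
          finally show "(\<Sum>Z\<in>Sx. norm (\<Phi> Z) / real (card Z)) \<le> Cb'" unfolding Cb'_def by simp
        qed (use E0 in simp)
        finally have "(\<Sum>Z\<in>Sx. norm (\<Phi> Z) * (\<Sum>z\<in>Z. w z)) \<le> Cb' * (N\<^sup>2 * E)" .
        moreover have "2 * (Cb' * (N\<^sup>2 * E)) \<le> \<kappa> * w x"
          unfolding \<kappa>_def E_def using wpos[of x] by (simp add: algebra_simps)
        ultimately show ?thesis unfolding Sx_def by linarith
      qed
      have main: "norm (dynamics j \<Phi> \<Lambda> t A * B - B * dynamics j \<Phi> \<Lambda> t A)
          \<le> 2 * norm A * norm B * (\<Sum>x\<in>phi_boundary \<Phi> X. w x) * exp (2 * \<kappa> * \<bar>t\<bar>)"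
      proof (cases "0 \<le> t")
        case True
        have "norm (comm (dyn j (hamiltonian \<Phi> \<Lambda>) t A) B)
          \<le> 2 * norm A * norm B * (\<Sum>x\<in>phi_boundary \<Phi> X. w x) * exp (2 * \<kappa> * t)"
          by (rule main_pos[OF stP PhiA cd mono wpos wY kap kb finX finY finL XYL A B True])
        then show ?thesis using True unfolding comm_def dyn_def dynamics_def by simp
      next
        case False
        have "norm (comm (dyn (- j) (hamiltonian \<Phi> \<Lambda>) (- t) A) B)
          \<le> 2 * norm A * norm B * (\<Sum>x\<in>phi_boundary \<Phi> X. w x) * exp (2 * \<kappa> * (- t))"
          by (rule cst.main_pos[OF neg]) (fact stP PhiA cd mono wpos wY kap kb finX finY finL XYL A B | use False in simp)+
        then show ?thesis using False unfolding comm_def dyn_def dynamics_def by simp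
      qed
      have sumw: "(\<Sum>x\<in>phi_boundary \<Phi> X. w x) \<le> real (card (phi_boundary \<Phi> X)) * exp (- \<mu> * setdist_d d X (- Y))"
      proof -
        have "(\<Sum>x\<in>phi_boundary \<Phi> X. w x) \<le> (\<Sum>x\<in>phi_boundary \<Phi> X. exp (- \<mu> * setdist_d d X (- Y)))"
        proof (rule sum_mono)
          fix x assume "x \<in> phi_boundary \<Phi> X"
          then have x: "x \<in> X" unfolding phi_boundary_def by blast
          have "setdist_d d X (- Y) \<le> dist x" unfolding dist_def by (rule sd_mono[OF nn x])
          then show "w x \<le> exp (- \<mu> * setdist_d d X (- Y))" unfolding w_def using mu by simp
        qed
        then show ?thesis by simp
      qed
      have "2 * norm A * norm B * (\<Sum>x\<in>phi_boundary \<Phi> X. w x) * exp (2 * \<kappa> * \<bar>t\<bar>)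
          \<le> 2 * norm A * norm B * (real (card (phi_boundary \<Phi> X)) * exp (- \<mu> * setdist_d d X (- Y))) * exp (2 * \<kappa> * \<bar>t\<bar>)"
        using sumw by (intro mult_right_mono mult_left_mono) auto
      also have "\<dots> = 2 * norm A * norm B * real (card (phi_boundary \<Phi> X))
                    * exp (- \<mu> * (setdist_d d X (- Y) - 2 * \<kappa> / \<mu> * \<bar>t\<bar>))"
      proof -
        have "- \<mu> * (setdist_d d X (- Y) - 2 * \<kappa> / \<mu> * \<bar>t\<bar>) = - \<mu> * setdist_d d X (- Y) + 2 * \<kappa> * \<bar>t\<bar>"
          using mu by (simp add: field_simps)
        then have e: "exp (- \<mu> * (setdist_d d X (- Y) - 2 * \<kappa> / \<mu> * \<bar>t\<bar>)) = exp (- \<mu> * setdist_d d X (- Y)) * exp (2 * \<kappa> * \<bar>t\<bar>)"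
          by (simp only: exp_add)
        show ?thesis by (simp only: e mult.assoc)
      qed
      finally show "norm (dynamics j \<Phi> \<Lambda> t A * B - B * dynamics j \<Phi> \<Lambda> t A)
                \<le> 2 * norm A * norm B * real (card (phi_boundary \<Phi> X))
                    * exp (- \<mu> * (setdist_d d X (- Y) - 2 * \<kappa> / \<mu> * \<bar>t\<bar>))"
        using main by linarith
    qed
  qed
qed


end
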